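(* Let $(x_i)_{i\in[n]}$ be i.i.d. Bernoulli random variables conditioned on the event $\sum_{i\in[n]}x_i=S$. Let $A,B_1,\dots,B_k$ partition $[n]$, and set $X=(x_i)_{i\in A}$, $Y_j=(x_i)_{i\in B_j}$, $Z_j=\sum_{i\in B_j}x_i$ for $1\le j\le k$. Let $f$ be a real-valued function and $\varphi(t)=\mathbb{E}\,e^{itf(X,Y_1,\dots,Y_k)}$. Then \[|\varphi(t)|^{2^k}\le\mathbb{E}_{Z_1,\dots,Z_k,Y_1^0,Y_1^1,\dots,Y_k^0,Y_k^1}\Big|\mathbb{E}_X\big[e^{it\alpha(f)(X,\mathbf{Y})}\,\big|\,Z_1,\dots,Z_k\big]\Big|,\] where $(Z_1,\dots,Z_k)$ has the distribution induced by the conditioned model, and given $Z_1,\dots,Z_k$ the vectors $Y_j^\ell$ ($1\le j\le k$, $\ell\in\{0,1\}$) are conditionally independent, each $Y_j^\ell$ uniform among $\{0,1\}$-vectors indexed by $B_j$ with exactly $Z_j$ ones, and the inner expectation is over $X$ with its conditional distribution given $Z_1,\dots,Z_k$.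
   Context: For $f(X,Y_1,\dots,Y_k)$, the decoupling operator $\alpha$ is $\alpha(f)(X,Y_1^0,Y_1^1,\dots,Y_k^0,Y_k^1)=\sum_{\mathbf{v}\in\{0,1\}^k}(-1)^{|\mathbf{v}|}f(X,Y_1^{v_1},\dots,Y_k^{v_k})$, and $\mathbf{Y}=(Y_1^0,Y_1^1,\dots,Y_k^0,Y_k^1)$. *)

theory Defs
  imports "HOL-Probability.Probability"
begin

text \<open>Vectors in {0,1}^n are functions nat => bool that are False outside {..<n}.\<close>

definition cond_bern :: "real \<Rightarrow> nat \<Rightarrow> nat \<Rightarrow> (nat \<Rightarrow> bool) pmf" where
  "cond_bern p n S =
     cond_pmf (Pi_pmf {..<n} False (\<lambda>_. bernoulli_pmf p)) {x. card {i\<in>{..<n}. x i} = S}"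

definition blocksum :: "(nat \<Rightarrow> nat set) \<Rightarrow> nat \<Rightarrow> (nat \<Rightarrow> bool) \<Rightarrow> nat \<Rightarrow> nat" where
  "blocksum B k x = (\<lambda>j. if j \<in> {1..k} then card {i\<in>B j. x i} else 0)"

definition unif_block :: "nat set \<Rightarrow> nat \<Rightarrow> (nat \<Rightarrow> bool) pmf" where
  "unif_block Bj m = pmf_of_set {y. (\<forall>i. i \<notin> Bj \<longrightarrow> \<not> y i) \<and> card {i\<in>Bj. y i} = m}"

definition Ydist :: "(nat \<Rightarrow> nat set) \<Rightarrow> nat \<Rightarrow> (nat \<Rightarrow> nat) \<Rightarrow> (nat \<times> bool \<Rightarrow> nat \<Rightarrow> bool) pmf" where
  "Ydist B k z = Pi_pmf ({1..k} \<times> UNIV) (\<lambda>_. False) (\<lambda>(j, l). unif_block (B j) (z j))"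

definition glue :: "nat set \<Rightarrow> (nat \<Rightarrow> nat set) \<Rightarrow> nat \<Rightarrow> (nat \<Rightarrow> bool)
    \<Rightarrow> (nat \<times> bool \<Rightarrow> nat \<Rightarrow> bool) \<Rightarrow> (nat \<Rightarrow> bool) \<Rightarrow> nat \<Rightarrow> bool" where
  "glue A B k X Y v = (\<lambda>i. if i \<in> A then X i else (\<exists>j\<in>{1..k}. i \<in> B j \<and> Y (j, v j) i))"

definition decouple :: "nat set \<Rightarrow> (nat \<Rightarrow> nat set) \<Rightarrow> nat \<Rightarrow> ((nat \<Rightarrow> bool) \<Rightarrow> real)
    \<Rightarrow> (nat \<Rightarrow> bool) \<Rightarrow> (nat \<times> bool \<Rightarrow> nat \<Rightarrow> bool) \<Rightarrow> real" where
  "decouple A B k f X Y =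
     (\<Sum>v \<in> {1..k} \<rightarrow>\<^sub>E (UNIV :: bool set).
        (-1) ^ card {j\<in>{1..k}. v j} * f (glue A B k X Y v))"

end

theory Submission
  imports Defs
begin


lemma fin_int_mono:
  fixes f g :: "'a \<Rightarrow> real"
  assumes "finite (set_pmf P)" "\<And>x. x \<in> set_pmf P \<Longrightarrow> f x \<le> g x"
  shows "(\<integral>x. f x \<partial>measure_pmf P) \<le> (\<integral>x. g x \<partial>measure_pmf P)"
  using assms by (intro integral_mono_AE) (auto simp: AE_measure_pmf_iff integrable_measure_pmf_finite)

lemma fin_int_swap:
  fixes f :: "'a \<Rightarrow> 'b \<Rightarrow> 'c::{banach, second_countable_topology}"
  assumes "finite (set_pmf A)" "finite (set_pmf B)"
  shows "(\<integral>a. (\<integral>b. f a b \<partial>measure_pmf B) \<partial>measure_pmf A)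
       = (\<integral>b. (\<integral>a. f a b \<partial>measure_pmf A) \<partial>measure_pmf B)"
proof -
  have "(\<integral>a. (\<integral>b. f a b \<partial>measure_pmf B) \<partial>measure_pmf A)
     = (\<Sum>a\<in>set_pmf A. pmf A a *\<^sub>R (\<Sum>b\<in>set_pmf B. pmf B b *\<^sub>R f a b))"
    using assms by (simp add: integral_measure_pmf[of "set_pmf A"] integral_measure_pmf[of "set_pmf B"])
  also have "\<dots> = (\<Sum>b\<in>set_pmf B. pmf B b *\<^sub>R (\<Sum>a\<in>set_pmf A. pmf A a *\<^sub>R f a b))"
    by (simp add: scaleR_sum_right sum.swap[of _ "set_pmf A"] mult.commute)
  also have "\<dots> = (\<integral>b. (\<integral>a. f a b \<partial>measure_pmf A) \<partial>measure_pmf B)"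
    using assms by (simp add: integral_measure_pmf[of "set_pmf A"] integral_measure_pmf[of "set_pmf B"])
  finally show ?thesis .
qed

lemma fin_int_bind:
  fixes h :: "'b \<Rightarrow> 'c::{banach, second_countable_topology}"
  assumes "finite (set_pmf p)" "\<And>a. a \<in> set_pmf p \<Longrightarrow> finite (set_pmf (f a))"
  shows "(\<integral>x. h x \<partial>measure_pmf (bind_pmf p f)) = (\<integral>a. (\<integral>x. h x \<partial>measure_pmf (f a)) \<partial>measure_pmf p)"
  using assms by (simp add: pmf_expectation_bind[OF assms(1) assms(2) order_refl] integral_measure_pmf[of "set_pmf p"])

lemma fin_int_map:
  fixes h :: "'b \<Rightarrow> 'c::{banach, second_countable_topology}"
  shows "(\<integral>x. h x \<partial>measure_pmf (map_pmf g p)) = (\<integral>a. h (g a) \<partial>measure_pmf p)"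
  by (simp add: map_pmf_rep_eq integral_distr)

lemma fin_int_pair:
  fixes h :: "'a \<times> 'b \<Rightarrow> 'c::{banach, second_countable_topology}"
  assumes "finite (set_pmf A)" "finite (set_pmf B)"
  shows "(\<integral>x. h x \<partial>measure_pmf (pair_pmf A B)) = (\<integral>a. (\<integral>b. h (a, b) \<partial>measure_pmf B) \<partial>measure_pmf A)"
  unfolding pair_pmf_def using assms
  by (simp add: fin_int_bind)

lemma fin_jensen:
  fixes X :: "'a \<Rightarrow> real"
  assumes "finite (set_pmf P)" "\<And>x. x \<in> set_pmf P \<Longrightarrow> 0 \<le> X x"
  shows "(\<integral>x. X x \<partial>measure_pmf P) ^ (2 ^ m) \<le> (\<integral>x. X x ^ (2 ^ m) \<partial>measure_pmf P)"
proof (induction m)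
  case 0 then show ?case by simp
next
  case (Suc m)
  have sq: "(\<integral>x. Y x \<partial>measure_pmf P)\<^sup>2 \<le> (\<integral>x. (Y x)\<^sup>2 \<partial>measure_pmf P)" for Y :: "'a \<Rightarrow> real"
  proof -
    have "0 \<le> measure_pmf.variance P Y" by (rule measure_pmf.variance_positive)
    also have "measure_pmf.variance P Y = (\<integral>x. (Y x)\<^sup>2 \<partial>measure_pmf P) - (\<integral>x. Y x \<partial>measure_pmf P)\<^sup>2"
      using assms(1) by (intro measure_pmf.variance_eq) (auto simp: integrable_measure_pmf_finite)
    finally show ?thesis by simp
  qed
  have nn: "0 \<le> (\<integral>x. X x \<partial>measure_pmf P)"
    using assms by (intro integral_nonneg_AE) (auto simp: AE_measure_pmf_iff)
  have "(\<integral>x. X x \<partial>measure_pmf P) ^ (2 ^ Suc m) = ((\<integral>x. X x \<partial>measure_pmf P) ^ (2 ^ m))\<^sup>2"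
    by (simp add: power_mult[symmetric] mult.commute)
  also have "\<dots> \<le> (\<integral>x. X x ^ (2 ^ m) \<partial>measure_pmf P)\<^sup>2"
    using Suc nn by (intro power_mono) auto
  also have "\<dots> \<le> (\<integral>x. (X x ^ (2 ^ m))\<^sup>2 \<partial>measure_pmf P)" by (rule sq)
  also have "\<dots> = (\<integral>x. X x ^ (2 ^ Suc m) \<partial>measure_pmf P)"
    by (simp add: power_mult[symmetric] mult.commute)
  finally show ?case .
qed



lemma fin_Pi:
  assumes "finite A" "\<And>x. x \<in> A \<Longrightarrow> finite (set_pmf (p x))"
  shows "finite (set_pmf (Pi_pmf A d p))"
  using assms by (simp add: set_Pi_pmf finite_PiE_dflt)

lemma fin_sq:
  fixes Y :: "'a \<Rightarrow> real"
  assumes "finite (set_pmf P)"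
  shows "(\<integral>x. Y x \<partial>measure_pmf P)\<^sup>2 \<le> (\<integral>x. (Y x)\<^sup>2 \<partial>measure_pmf P)"
proof -
  have "0 \<le> measure_pmf.variance P Y" by (rule measure_pmf.variance_positive)
  also have "measure_pmf.variance P Y = (\<integral>x. (Y x)\<^sup>2 \<partial>measure_pmf P) - (\<integral>x. Y x \<partial>measure_pmf P)\<^sup>2"
    using assms(1) by (intro measure_pmf.variance_eq) (auto simp: integrable_measure_pmf_finite)
  finally show ?thesis by simp
qed

lemma exp_cnj_mult:
  "exp (\<i> * complex_of_real a) * cnj (exp (\<i> * complex_of_real b)) = exp (\<i> * complex_of_real (a - b))"
proof -
  have "cnj (exp (\<i> * complex_of_real b)) = exp (- (\<i> * complex_of_real b))"
    by (simp add: exp_cnj)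
  then show ?thesis by (simp add: exp_add[symmetric] algebra_simps)
qed

lemma alpha_insert:
  fixes F :: "(nat \<Rightarrow> 'b) \<Rightarrow> real"
  assumes "finite J" "a \<notin> J"
  shows "(\<Sum>v\<in>insert a J \<rightarrow>\<^sub>E (UNIV::bool set). (-1) ^ card {j\<in>insert a J. v j} * F (\<lambda>j. Y (j, v j)))
    = (\<Sum>v\<in>J \<rightarrow>\<^sub>E (UNIV::bool set). (-1) ^ card {j\<in>J. v j} *
          (F ((\<lambda>j. Y (j, v j))(a := Y (a, False))) - F ((\<lambda>j. Y (j, v j))(a := Y (a, True)))))"
proof -
  have inj: "inj_on (\<lambda>(b, g). g(a := b)) (UNIV \<times> (J \<rightarrow>\<^sub>E (UNIV::bool set)))"
  proof (rule inj_onI, clarify)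
    fix b g b' g'
    assume g: "g \<in> J \<rightarrow>\<^sub>E UNIV" and g': "g' \<in> J \<rightarrow>\<^sub>E UNIV" and eq: "g(a := b) = g'(a := b')"
    have "b = b'" using fun_cong[OF eq, of a] by simp
    moreover have "g = g'"
    proof
      fix j show "g j = g' j"
        using fun_cong[OF eq, of j] g g' assms(2) by (cases "j = a") (auto simp: PiE_def extensional_def)
    qed
    ultimately show "b = b' \<and> g = g'" by simp
  qed
  have card: "card {j\<in>insert a J. (g(a := b)) j} = (if b then Suc (card {j\<in>J. g j}) else card {j\<in>J. g j})"
    for g :: "nat \<Rightarrow> bool" and b
  proof -
    have "{j\<in>insert a J. (g(a := b)) j} = (if b then insert a {j\<in>J. g j} else {j\<in>J. g j})"
      using assms(2) by auto
    then show ?thesis using assms by simp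
  qed
  have upd: "(\<lambda>j. Y (j, (g(a := b)) j)) = (\<lambda>j. Y (j, g j))(a := Y (a, b))" for g :: "nat \<Rightarrow> bool" and b
    by auto
  have "(\<Sum>v\<in>insert a J \<rightarrow>\<^sub>E (UNIV::bool set). (-1) ^ card {j\<in>insert a J. v j} * F (\<lambda>j. Y (j, v j)))
      = (\<Sum>(b, g)\<in>UNIV \<times> (J \<rightarrow>\<^sub>E (UNIV::bool set)). (-1) ^ card {j\<in>insert a J. (g(a:=b)) j} * F (\<lambda>j. Y (j, (g(a:=b)) j)))"
    by (subst PiE_insert_eq, subst sum.reindex[OF inj]) (simp add: case_prod_unfold)
  also have "\<dots> = (\<Sum>b\<in>UNIV. \<Sum>g\<in>J \<rightarrow>\<^sub>E (UNIV::bool set). (-1) ^ card {j\<in>insert a J. (g(a:=b)) j} * F (\<lambda>j. Y (j, (g(a:=b)) j)))"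
    by (simp add: sum.cartesian_product)
  also have "\<dots> = (\<Sum>g\<in>J \<rightarrow>\<^sub>E (UNIV::bool set). (-1) ^ card {j\<in>J. g j} * F ((\<lambda>j. Y (j, g j))(a := Y (a, False))))
      + (\<Sum>g\<in>J \<rightarrow>\<^sub>E (UNIV::bool set). (-1) ^ Suc (card {j\<in>J. g j}) * F ((\<lambda>j. Y (j, g j))(a := Y (a, True))))"
    unfolding card upd by (simp add: UNIV_bool add.commute)
  also have "\<dots> = (\<Sum>v\<in>J \<rightarrow>\<^sub>E (UNIV::bool set). (-1) ^ card {j\<in>J. v j} *
          (F ((\<lambda>j. Y (j, v j))(a := Y (a, False))) - F ((\<lambda>j. Y (j, v j))(a := Y (a, True)))))"
    by (simp add: sum.distrib[symmetric] algebra_simps)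
  finally show ?thesis .
qed


lemma gowers:
  fixes M :: "'a pmf" and N :: "nat \<Rightarrow> 'b pmf" and d :: 'b
  assumes "finite J" "finite (set_pmf M)" "\<And>j. j \<in> J \<Longrightarrow> finite (set_pmf (N j))"
  shows "cmod (\<integral>x. (\<integral>y. exp (\<i> * complex_of_real (F x y)) \<partial>measure_pmf (Pi_pmf J d N)) \<partial>measure_pmf M) ^ (2 ^ card J)
    \<le> (\<integral>Y. cmod (\<integral>x. exp (\<i> * complex_of_real (\<Sum>v\<in>J \<rightarrow>\<^sub>E (UNIV::bool set). (-1) ^ card {j\<in>J. v j} * F x (\<lambda>j. Y (j, v j)))) \<partial>measure_pmf M)
        \<partial>measure_pmf (Pi_pmf (J \<times> UNIV) d (\<lambda>(j, l). N j)))"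
  using assms(1,3)
proof (induction J arbitrary: F rule: finite_induct)
  case empty
  then show ?case by simp
next
  case (insert a J)
  define P' where "P' = Pi_pmf J d N"
  define Q' where "Q' = Pi_pmf (J \<times> (UNIV::bool set)) d (\<lambda>(j, l). N j)"
  define Na where "Na = N a"
  define W where "W = pair_pmf Na Na"
  define e where "e = (\<lambda>r::real. exp (\<i> * complex_of_real r))"
  define F' where "F' = (\<lambda>w x y. F x (y(a := fst w)) - F x (y(a := snd w)))"
  define H where "H = (\<lambda>x y'. \<integral>ya. e (F x (y'(a := ya))) \<partial>measure_pmf Na)"
  define \<Phi> where "\<Phi> = (\<lambda>w. \<integral>x. (\<integral>y'. e (F' w x y') \<partial>measure_pmf P') \<partial>measure_pmf M)"
  define L where "L = (\<integral>x. (\<integral>y. e (F x y) \<partial>measure_pmf (Pi_pmf (insert a J) d N)) \<partial>measure_pmf M)"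
  have finNa: "finite (set_pmf Na)" using insert by (simp add: Na_def)
  have finP': "finite (set_pmf P')" unfolding P'_def using insert by (intro fin_Pi) auto
  have finQ': "finite (set_pmf Q')" unfolding Q'_def using insert by (intro fin_Pi) (auto intro!: finite_cartesian_product)
  have finW: "finite (set_pmf W)" unfolding W_def using finNa by simp
  have finM: "finite (set_pmf M)" by (rule assms(2))
  have L1: "L = (\<integral>x. (\<integral>y'. H x y' \<partial>measure_pmf P') \<partial>measure_pmf M)"
  proof -
    have "(\<integral>y. e (F x y) \<partial>measure_pmf (Pi_pmf (insert a J) d N)) = (\<integral>y'. H x y' \<partial>measure_pmf P')" for x
    proof -
      have "(\<integral>y. e (F x y) \<partial>measure_pmf (Pi_pmf (insert a J) d N))
          = (\<integral>ya. (\<integral>y'. e (F x (y'(a := ya))) \<partial>measure_pmf P') \<partial>measure_pmf Na)"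
        unfolding Pi_pmf_insert[OF insert(1,2)] fin_int_map using finNa finP'
        by (simp add: fin_int_pair P'_def Na_def)
      also have "\<dots> = (\<integral>y'. H x y' \<partial>measure_pmf P')"
        unfolding H_def by (rule fin_int_swap[OF finNa finP'])
      finally show ?thesis .
    qed
    then show ?thesis unfolding L_def by simp
  qed
  have cmodH: "complex_of_real ((cmod (H x y'))\<^sup>2) = (\<integral>w. e (F' w x y') \<partial>measure_pmf W)" for x y'
  proof -
    have "complex_of_real ((cmod (H x y'))\<^sup>2) = H x y' * cnj (H x y')"
      by (rule complex_norm_square)
    also have "\<dots> = (\<integral>y0. (\<integral>y1. e (F x (y'(a := y0))) * cnj (e (F x (y'(a := y1)))) \<partial>measure_pmf Na) \<partial>measure_pmf Na)"
      unfolding H_def using finNa by (simp add: integrable_measure_pmf_finite)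
    also have "\<dots> = (\<integral>w. e (F' w x y') \<partial>measure_pmf W)"
      unfolding W_def using finNa by (simp add: fin_int_pair F'_def e_def exp_cnj_mult)
    finally show ?thesis .
  qed
  define r where "r = (\<integral>x. (\<integral>y'. (cmod (H x y'))\<^sup>2 \<partial>measure_pmf P') \<partial>measure_pmf M)"
  have r_nn: "0 \<le> r" unfolding r_def by (intro integral_nonneg_AE) (auto intro!: integral_nonneg_AE)
  have L2: "(cmod L)\<^sup>2 \<le> r"
  proof -
    have "cmod L \<le> (\<integral>x. cmod (\<integral>y'. H x y' \<partial>measure_pmf P') \<partial>measure_pmf M)"
      unfolding L1 by (rule integral_norm_bound)
    also have "\<dots> \<le> (\<integral>x. (\<integral>y'. cmod (H x y') \<partial>measure_pmf P') \<partial>measure_pmf M)"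
      using finM by (intro fin_int_mono integral_norm_bound)
    finally have "(cmod L)\<^sup>2 \<le> (\<integral>x. (\<integral>y'. cmod (H x y') \<partial>measure_pmf P') \<partial>measure_pmf M)\<^sup>2"
      by (intro power_mono) auto
    also have "\<dots> \<le> (\<integral>x. (\<integral>y'. cmod (H x y') \<partial>measure_pmf P')\<^sup>2 \<partial>measure_pmf M)"
      using finM by (rule fin_sq)
    also have "\<dots> \<le> r"
      unfolding r_def using finM finP' by (intro fin_int_mono fin_sq)
    finally show ?thesis .
  qed
  have r_eq: "complex_of_real r = (\<integral>w. \<Phi> w \<partial>measure_pmf W)"
  proof -
    have "complex_of_real r = (\<integral>x. (\<integral>y'. (\<integral>w. e (F' w x y') \<partial>measure_pmf W) \<partial>measure_pmf P') \<partial>measure_pmf M)"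
      unfolding r_def by (simp only: integral_complex_of_real[symmetric] cmodH)
    also have "\<dots> = (\<integral>x. (\<integral>w. (\<integral>y'. e (F' w x y') \<partial>measure_pmf P') \<partial>measure_pmf W) \<partial>measure_pmf M)"
      by (simp only: fin_int_swap[OF finP' finW])
    also have "\<dots> = (\<integral>w. \<Phi> w \<partial>measure_pmf W)"
      unfolding \<Phi>_def by (rule fin_int_swap[OF finM finW])
    finally show ?thesis .
  qed
  have r_le: "r \<le> (\<integral>w. cmod (\<Phi> w) \<partial>measure_pmf W)"
  proof -
    have "r = cmod (complex_of_real r)" using r_nn by simp
    also have "\<dots> \<le> (\<integral>w. cmod (\<Phi> w) \<partial>measure_pmf W)" unfolding r_eq by (rule integral_norm_bound)
    finally show ?thesis .
  qed
  define m where "m = card J"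
  have cardI: "card (insert a J) = Suc m" using insert by (simp add: m_def)
  have "cmod L ^ (2 ^ card (insert a J)) = ((cmod L)\<^sup>2) ^ (2 ^ m)"
    unfolding cardI by (simp add: power_mult[symmetric] mult.commute)
  also have "\<dots> \<le> (\<integral>w. cmod (\<Phi> w) \<partial>measure_pmf W) ^ (2 ^ m)"
    using L2 r_le by (intro power_mono) auto
  also have "\<dots> \<le> (\<integral>w. cmod (\<Phi> w) ^ (2 ^ m) \<partial>measure_pmf W)"
    using finW by (intro fin_jensen) auto
  also have "\<dots> \<le> (\<integral>w. (\<integral>Y. cmod (\<integral>x. e (\<Sum>v\<in>J \<rightarrow>\<^sub>E (UNIV::bool set). (-1) ^ card {j\<in>J. v j} * F' w x (\<lambda>j. Y (j, v j))) \<partial>measure_pmf M) \<partial>measure_pmf Q') \<partial>measure_pmf W)"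
    using finW by (intro fin_int_mono) (use insert(3) insert(4) in \<open>auto simp: \<Phi>_def m_def e_def P'_def Q'_def\<close>)
  also have "\<dots> = (\<integral>Y. cmod (\<integral>x. e (\<Sum>v\<in>insert a J \<rightarrow>\<^sub>E (UNIV::bool set). (-1) ^ card {j\<in>insert a J. v j} * F x (\<lambda>j. Y (j, v j))) \<partial>measure_pmf M)
        \<partial>measure_pmf (Pi_pmf (insert a J \<times> UNIV) d (\<lambda>(j, l). N j)))"
  proof -
    define R where "R = (\<lambda>Y. cmod (\<integral>x. e (\<Sum>v\<in>insert a J \<rightarrow>\<^sub>E (UNIV::bool set). (-1) ^ card {j\<in>insert a J. v j} * F x (\<lambda>j. Y (j, v j))) \<partial>measure_pmf M))"
    have setq: "insert a J \<times> (UNIV::bool set) = insert (a, False) (insert (a, True) (J \<times> UNIV))"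
      by (auto simp: UNIV_bool)
    have fin1: "finite (insert (a, True) (J \<times> (UNIV::bool set)))" using insert by auto
    have nin1: "(a, False) \<notin> insert (a, True) (J \<times> (UNIV::bool set))" using insert by auto
    have fin2: "finite (J \<times> (UNIV::bool set))" using insert by auto
    have nin2: "(a, True) \<notin> J \<times> (UNIV::bool set)" using insert by auto
    have pi: "Pi_pmf (insert a J \<times> (UNIV::bool set)) d (\<lambda>(j, l). N j)
      = map_pmf (\<lambda>(y, f). f((a, False) := y)) (pair_pmf Na (map_pmf (\<lambda>(y, f). f((a, True) := y)) (pair_pmf Na Q')))"
      unfolding setq Pi_pmf_insert[OF fin1 nin1] Pi_pmf_insert[OF fin2 nin2] by (simp add: Q'_def Na_def)
    have fin3: "finite (set_pmf (map_pmf (\<lambda>(y, f). f((a, True) := y)) (pair_pmf Na Q')))"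
      using finNa finQ' by simp
    have pw: "R (Y'((a, True) := y1, (a, False) := y0)) =
      cmod (\<integral>x. e (\<Sum>v\<in>J \<rightarrow>\<^sub>E (UNIV::bool set). (-1) ^ card {j\<in>J. v j} * F' (y0, y1) x (\<lambda>j. Y' (j, v j))) \<partial>measure_pmf M)"
      for Y' y0 y1
    proof -
      have eqf: "(\<lambda>j. (Y'((a, True) := y1, (a, False) := y0)) (j, v j))(a := c) = (\<lambda>j. Y' (j, v j))(a := c)"
        for v :: "nat \<Rightarrow> bool" and c
        by auto
      show ?thesis unfolding R_def alpha_insert[OF insert(1,2)] eqf
        by (simp add: F'_def)
    qed
    have "(\<integral>Y. R Y \<partial>measure_pmf (Pi_pmf (insert a J \<times> (UNIV::bool set)) d (\<lambda>(j, l). N j)))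
       = (\<integral>y0. (\<integral>y1. (\<integral>Y'. R (Y'((a, True) := y1, (a, False) := y0)) \<partial>measure_pmf Q') \<partial>measure_pmf Na) \<partial>measure_pmf Na)"
      unfolding pi fin_int_map fin_int_pair[OF finNa fin3] fin_int_pair[OF finNa finQ'] by simp
    also have "\<dots> = (\<integral>w. (\<integral>Y. cmod (\<integral>x. e (\<Sum>v\<in>J \<rightarrow>\<^sub>E (UNIV::bool set). (-1) ^ card {j\<in>J. v j} * F' w x (\<lambda>j. Y (j, v j))) \<partial>measure_pmf M) \<partial>measure_pmf Q') \<partial>measure_pmf W)"
      unfolding W_def fin_int_pair[OF finNa finNa] pw ..
    finally show ?thesis unfolding R_def by simp
  qed
  finally show ?case unfolding L_def e_def .
qed



definition Wset :: "nat \<Rightarrow> nat \<Rightarrow> (nat \<Rightarrow> bool) set" where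
  "Wset n S = {x. (\<forall>i. i \<notin> {..<n} \<longrightarrow> \<not> x i) \<and> card {i\<in>{..<n}. x i} = S}"

lemma finite_supp: "finite X \<Longrightarrow> finite {x::nat\<Rightarrow>bool. \<forall>i. i \<notin> X \<longrightarrow> \<not> x i}"
proof -
  assume "finite X"
  then have "finite (PiE_dflt X False (\<lambda>_. UNIV))" by (intro finite_PiE_dflt) auto
  moreover have "PiE_dflt X False (\<lambda>_. UNIV) = {x::nat\<Rightarrow>bool. \<forall>i. i \<notin> X \<longrightarrow> \<not> x i}"
    by (auto simp: PiE_dflt_def)
  ultimately show ?thesis by simp
qed

lemma finite_Wset: "finite (Wset n S)"
  by (rule finite_subset[OF _ finite_supp[of "{..<n}"]]) (auto simp: Wset_def)

lemma Wset_ne: "S \<le> n \<Longrightarrow> Wset n S \<noteq> {}"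
proof -
  assume "S \<le> n"
  then have "{i\<in>{..<n}. i < S} = {..<S}" by auto
  then have "(\<lambda>i. i < S) \<in> Wset n S" using \<open>S \<le> n\<close> by (auto simp: Wset_def)
  then show ?thesis by auto
qed

lemma cond_bern_eq:
  assumes p: "0 < p" "p < 1" and S: "S \<le> n"
  shows "cond_bern p n S = pmf_of_set (Wset n S)"
proof -
  define P where "P = Pi_pmf {..<n} False (\<lambda>_. bernoulli_pmf p)"
  define C where "C = {x::nat\<Rightarrow>bool. card {i\<in>{..<n}. x i} = S}"
  define c where "c = p ^ S * (1 - p) ^ (n - S)"
  have setP: "set_pmf P = {x. \<forall>i. i \<notin> {..<n} \<longrightarrow> \<not> x i}"
    unfolding P_def using p by (auto simp: set_Pi_pmf PiE_dflt_def)
  have PC: "set_pmf P \<inter> C = Wset n S" unfolding setP C_def Wset_def by auto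
  have ne: "set_pmf P \<inter> C \<noteq> {}" using PC Wset_ne[OF S] by simp
  have pmfP: "pmf P x = c" if "x \<in> Wset n S" for x
  proof -
    have sup: "\<And>i. i \<notin> {..<n} \<Longrightarrow> x i = False" using that by (auto simp: Wset_def)
    have "pmf P x = (\<Prod>i\<in>{..<n}. pmf (bernoulli_pmf p) (x i))"
      unfolding P_def by (rule pmf_Pi'[OF finite_lessThan sup])
    also have "\<dots> = (\<Prod>i\<in>{..<n}. if x i then p else 1 - p)"
      using p by (intro prod.cong) auto
    also have "\<dots> = p ^ card ({..<n} \<inter> {i. x i}) * (1 - p) ^ card ({..<n} \<inter> - {i. x i})"
      by (simp add: prod.If_cases)
    also have "{..<n} \<inter> {i. x i} = {i\<in>{..<n}. x i}" by auto
    also have "{..<n} \<inter> - {i. x i} = {..<n} - {i\<in>{..<n}. x i}" by auto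
    also have "card ({..<n} - {i\<in>{..<n}. x i}) = n - S"
      using that by (subst card_Diff_subset) (auto simp: Wset_def)
    finally show ?thesis using that by (simp add: c_def Wset_def)
  qed
  have meas: "measure_pmf.prob P C = real (card (Wset n S)) * c"
  proof -
    have "measure_pmf.prob P C = measure_pmf.prob P (C \<inter> set_pmf P)"
      by (simp add: measure_Int_set_pmf)
    also have "C \<inter> set_pmf P = Wset n S" using PC by auto
    also have "measure_pmf.prob P (Wset n S) = (\<Sum>x\<in>Wset n S. pmf P x)"
      by (rule measure_measure_pmf_finite[OF finite_Wset])
    also have "\<dots> = real (card (Wset n S)) * c" by (simp add: pmfP)
    finally show ?thesis .
  qed
  have cpos: "c > 0" unfolding c_def using p by simp
  have cardpos: "card (Wset n S) > 0" using Wset_ne[OF S] finite_Wset by (simp add: card_gt_0_iff)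
  show ?thesis
  proof (rule pmf_eqI)
    fix x
    have "pmf (cond_bern p n S) x = (if x \<in> C then pmf P x / measure_pmf.prob P C else 0)"
      unfolding cond_bern_def P_def[symmetric] C_def[symmetric] by (rule pmf_cond[OF ne])
    also have "\<dots> = indicator (Wset n S) x / real (card (Wset n S))"
    proof (cases "x \<in> Wset n S")
      case True
      then have "x \<in> C" using PC by auto
      then show ?thesis using True cpos by (simp add: pmfP True meas)
    next
      case False
      then have "x \<notin> C \<or> x \<notin> set_pmf P" using PC by auto
      then show ?thesis using False by (auto simp: set_pmf_eq)
    qed
    also have "\<dots> = pmf (pmf_of_set (Wset n S)) x"
      using Wset_ne[OF S] finite_Wset by simp
    finally show "pmf (cond_bern p n S) x = pmf (pmf_of_set (Wset n S)) x" .
  qed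
qed

lemma cond_pmf_of_set:
  assumes "finite W" "W \<inter> C \<noteq> {}"
  shows "cond_pmf (pmf_of_set W) C = pmf_of_set (W \<inter> C)"
proof (rule pmf_eqI)
  fix x
  have W: "W \<noteq> {}" using assms by auto
  have ne: "set_pmf (pmf_of_set W) \<inter> C \<noteq> {}" using assms W by simp
  have cW: "card W > 0" using assms W by (simp add: card_gt_0_iff)
  have cWC: "card (W \<inter> C) > 0" using assms by (simp add: card_gt_0_iff)
  show "pmf (cond_pmf (pmf_of_set W) C) x = pmf (pmf_of_set (W \<inter> C)) x"
    using assms W cW cWC by (simp add: pmf_cond[OF ne] measure_pmf_of_set indicator_def)
qed

lemma pmf_of_set_times:
  assumes "finite A" "A \<noteq> {}" "finite B" "B \<noteq> {}"
  shows "pmf_of_set (A \<times> B) = pair_pmf (pmf_of_set A) (pmf_of_set B)"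
proof (rule pmf_eqI)
  fix x :: "'a \<times> 'b"
  obtain a b where x: "x = (a, b)" by (cases x)
  show "pmf (pmf_of_set (A \<times> B)) x = pmf (pair_pmf (pmf_of_set A) (pmf_of_set B)) x"
    using assms by (simp add: x pmf_pair card_cartesian_product indicator_def)
qed



definition GG :: "nat set \<Rightarrow> (nat \<Rightarrow> nat set) \<Rightarrow> nat \<Rightarrow> (nat \<Rightarrow> bool) \<Rightarrow> (nat \<Rightarrow> nat \<Rightarrow> bool) \<Rightarrow> nat \<Rightarrow> bool" where
  "GG A B k x y = (\<lambda>i. if i \<in> A then x i else (\<exists>j\<in>{1..k}. i \<in> B j \<and> y j i))"

definition Ublk :: "(nat \<Rightarrow> nat set) \<Rightarrow> (nat \<Rightarrow> nat) \<Rightarrow> nat \<Rightarrow> (nat \<Rightarrow> bool) set" where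
  "Ublk B z j = {y. (\<forall>i. i \<notin> B j \<longrightarrow> \<not> y i) \<and> card {i\<in>B j. y i} = z j}"

definition resA :: "nat set \<Rightarrow> (nat \<Rightarrow> bool) \<Rightarrow> nat \<Rightarrow> bool" where
  "resA A w = (\<lambda>i. if i \<in> A then w i else False)"

lemma glue_GG: "glue A B k X Y v = GG A B k X (\<lambda>j. Y (j, v j))"
  by (simp add: glue_def GG_def)

lemma GG_GG: "GG A B k (GG A B k x y) y' = GG A B k x y'"
  by (auto simp: GG_def fun_eq_iff)

lemma GG_A: "i \<in> A \<Longrightarrow> GG A B k a y i = a i"
  by (simp add: GG_def)

lemma unif_block_eq: "unif_block (B j) (z j) = pmf_of_set (Ublk B z j)"
  by (simp add: unif_block_def Ublk_def)

context
  fixes n k :: nat and A :: "nat set" and B :: "nat \<Rightarrow> nat set"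
  assumes cover: "A \<union> (\<Union>j\<in>{1..k}. B j) = {..<n}"
    and disjA: "\<forall>j\<in>{1..k}. A \<inter> B j = {}"
    and disjB: "\<forall>j\<in>{1..k}. \<forall>j'\<in>{1..k}. j \<noteq> j' \<longrightarrow> B j \<inter> B j' = {}"
begin

lemma A_sub: "A \<subseteq> {..<n}" using cover by blast
lemma B_sub: "j \<in> {1..k} \<Longrightarrow> B j \<subseteq> {..<n}"
proof -
  assume "j \<in> {1..k}"
  then have "B j \<subseteq> (\<Union>j\<in>{1..k}. B j)" by blast
  then show ?thesis using cover by blast
qed
lemma B_fin: "j \<in> {1..k} \<Longrightarrow> finite (B j)" using B_sub finite_subset by blast
lemma A_fin: "finite A" using A_sub finite_subset by blast

lemma GG_block:
  assumes j: "j \<in> {1..k}" and i: "i \<in> B j"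
  shows "GG A B k a y i = y j i"
proof -
  have "i \<notin> A" using disjA j i by auto
  moreover have "(\<exists>j'\<in>{1..k}. i \<in> B j' \<and> y j' i) \<longleftrightarrow> y j i"
  proof
    assume "\<exists>j'\<in>{1..k}. i \<in> B j' \<and> y j' i"
    then obtain j' where j': "j' \<in> {1..k}" "i \<in> B j'" "y j' i" by blast
    have "j' = j"
    proof (rule ccontr)
      assume "j' \<noteq> j"
      then have "B j' \<inter> B j = {}" using disjB j j' by blast
      then show False using i j' by blast
    qed
    then show "y j i" using j' by simp
  next
    assume "y j i" then show "\<exists>j'\<in>{1..k}. i \<in> B j' \<and> y j' i" using j i by blast
  qed
  ultimately show ?thesis by (simp add: GG_def)
qed

lemma GG_out: "i \<notin> {..<n} \<Longrightarrow> GG A B k a y i = False"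
  using cover by (auto simp: GG_def)

lemma card_decomp: "card {i\<in>{..<n}. u i} = card {i\<in>A. u i} + (\<Sum>j\<in>{1..k}. card {i\<in>B j. u i})"
proof -
  have "{i\<in>{..<n}. u i} = {i\<in>A. u i} \<union> (\<Union>j\<in>{1..k}. {i\<in>B j. u i})"
    using cover by auto
  moreover have "card ({i\<in>A. u i} \<union> (\<Union>j\<in>{1..k}. {i\<in>B j. u i}))
      = card {i\<in>A. u i} + card (\<Union>j\<in>{1..k}. {i\<in>B j. u i})"
    using A_fin B_fin disjA by (intro card_Un_disjoint) auto
  moreover have "card (\<Union>j\<in>{1..k}. {i\<in>B j. u i}) = (\<Sum>j\<in>{1..k}. card {i\<in>B j. u i})"
    using B_fin disjB by (intro card_UN_disjoint) auto
  ultimately show ?thesis by simp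
qed

lemma Ublk_fin: "j \<in> {1..k} \<Longrightarrow> finite (Ublk B z j)"
  by (rule finite_subset[OF _ finite_supp[OF B_fin]]) (auto simp: Ublk_def)

lemma Wz_struct:
  assumes ne: "w0 \<in> Wset n S \<inter> {x. blocksum B k x = z}"
  shows "Wset n S \<inter> {x. blocksum B k x = z}
           = (\<lambda>(a, y). GG A B k a y) ` (resA A ` (Wset n S \<inter> {x. blocksum B k x = z}) \<times> PiE_dflt {1..k} (\<lambda>_. False) (Ublk B z))"
    and "inj_on (\<lambda>(a, y). GG A B k a y) (resA A ` (Wset n S \<inter> {x. blocksum B k x = z}) \<times> PiE_dflt {1..k} (\<lambda>_. False) (Ublk B z))"
    and "\<And>j. j \<in> {1..k} \<Longrightarrow> Ublk B z j \<noteq> {}"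
proof -
  define Wz where "Wz = Wset n S \<inter> {x. blocksum B k x = z}"
  have zj: "z j = card {i\<in>B j. w i} " if "w \<in> Wz" "j \<in> {1..k}" for w j
    using that by (auto simp: Wz_def blocksum_def)
  have zout: "z j = 0" if "j \<notin> {1..k}" for j
    using ne that by (auto simp: blocksum_def)
  have blk: "{i\<in>B j. GG A B k a y i} = {i\<in>B j. y j i}" if "j \<in> {1..k}" for a y j
    using GG_block[OF that] by auto
  show "Wz = (\<lambda>(a, y). GG A B k a y) ` (resA A ` Wz \<times> PiE_dflt {1..k} (\<lambda>_. False) (Ublk B z))"
  proof (intro equalityI subsetI)
    fix w assume w: "w \<in> Wz"
    define y where "y = (\<lambda>j. if j \<in> {1..k} then (\<lambda>i. i \<in> B j \<and> w i) else (\<lambda>_. False))"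
    have "y \<in> PiE_dflt {1..k} (\<lambda>_. False) (Ublk B z)"
      using zj[OF w] by (auto simp: y_def PiE_dflt_def Ublk_def)
    moreover have "w = GG A B k (resA A w) y"
    proof
      fix i
      show "w i = GG A B k (resA A w) y i"
      proof (cases "i \<in> A")
        case True then show ?thesis by (simp add: GG_def resA_def)
      next
        case False
        show ?thesis
        proof (cases "i < n")
          case True
          then obtain j where j: "j \<in> {1..k}" "i \<in> B j" using cover False by auto
          then show ?thesis by (simp add: GG_block y_def)
        next
          case False
          then show ?thesis using w GG_out[of i] by (auto simp: Wz_def Wset_def)
        qed
      qed
    qed
    ultimately show "w \<in> (\<lambda>(a, y). GG A B k a y) ` (resA A ` Wz \<times> PiE_dflt {1..k} (\<lambda>_. False) (Ublk B z))"
      using w by (intro image_eqI[where x="(resA A w, y)"]) auto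
  next
    fix u assume "u \<in> (\<lambda>(a, y). GG A B k a y) ` (resA A ` Wz \<times> PiE_dflt {1..k} (\<lambda>_. False) (Ublk B z))"
    then obtain w y where w: "w \<in> Wz" and y: "y \<in> PiE_dflt {1..k} (\<lambda>_. False) (Ublk B z)"
      and u: "u = GG A B k (resA A w) y" by auto
    have yj: "card {i\<in>B j. y j i} = z j" if "j \<in> {1..k}" for j
      using y that by (auto simp: PiE_dflt_def Ublk_def)
    have bs: "blocksum B k u = z"
    proof
      fix j show "blocksum B k u j = z j"
        using yj blk zout by (auto simp: blocksum_def u)
    qed
    have Au: "{i\<in>A. u i} = {i\<in>A. w i}" by (auto simp: u GG_A resA_def)
    have "card {i\<in>{..<n}. u i} = card {i\<in>{..<n}. w i}"
      unfolding card_decomp[of u] card_decomp[of w] Au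
      using zj[OF w] yj blk by (simp add: u)
    then have "card {i\<in>{..<n}. u i} = S" using w by (simp add: Wz_def Wset_def)
    then show "u \<in> Wz" using bs GG_out by (auto simp: Wz_def Wset_def u)
  qed
  show "inj_on (\<lambda>(a, y). GG A B k a y) (resA A ` Wz \<times> PiE_dflt {1..k} (\<lambda>_. False) (Ublk B z))"
  proof (rule inj_onI, clarify)
    fix w y w' y'
    assume y: "y \<in> PiE_dflt {1..k} (\<lambda>_. False) (Ublk B z)" and y': "y' \<in> PiE_dflt {1..k} (\<lambda>_. False) (Ublk B z)"
      and eq: "GG A B k (resA A w) y = GG A B k (resA A w') y'"
    have "resA A w = resA A w'"
    proof
      fix i show "resA A w i = resA A w' i"
        using fun_cong[OF eq, of i] by (cases "i \<in> A") (auto simp: GG_A resA_def)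
    qed
    moreover have "y = y'"
    proof
      fix j show "y j = y' j"
      proof (cases "j \<in> {1..k}")
        case False then show ?thesis using y y' by (auto simp: PiE_dflt_def)
      next
        case True
        show ?thesis
        proof
          fix i show "y j i = y' j i"
          proof (cases "i \<in> B j")
            case True
            then show ?thesis using fun_cong[OF eq, of i] GG_block[OF \<open>j \<in> {1..k}\<close> True] by metis
          next
            case False
            then show ?thesis using y y' \<open>j \<in> {1..k}\<close> by (auto simp: PiE_dflt_def Ublk_def)
          qed
        qed
      qed
    qed
    ultimately show "resA A w = resA A w' \<and> y = y'" by simp
  qed
  fix j assume j: "j \<in> {1..k}"
  have "(\<lambda>i. i \<in> B j \<and> w0 i) \<in> Ublk B z j"
    using zj[of w0 j] ne j by (auto simp: Wz_def Ublk_def)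
  then show "Ublk B z j \<noteq> {}" by auto
qed

end



lemma decouple_eq:
  "t * decouple A B k f x Y = (\<Sum>v\<in>{1..k} \<rightarrow>\<^sub>E (UNIV::bool set). (-1) ^ card {j\<in>{1..k}. v j} * (t * f (GG A B k x (\<lambda>j. Y (j, v j)))))"
  by (simp add: decouple_def glue_GG sum_distrib_left algebra_simps)

theorem lemma2p11:
  fixes p t :: real and n S k :: nat
    and A :: "nat set" and B :: "nat \<Rightarrow> nat set"
    and f :: "(nat \<Rightarrow> bool) \<Rightarrow> real"
  assumes p: "0 < p" "p < 1"
    and S: "S \<le> n"
    and cover: "A \<union> (\<Union>j\<in>{1..k}. B j) = {..<n}"
    and disjA: "\<forall>j\<in>{1..k}. A \<inter> B j = {}"
    and disjB: "\<forall>j\<in>{1..k}. \<forall>j'\<in>{1..k}. j \<noteq> j' \<longrightarrow> B j \<inter> B j' = {}"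
  shows "cmod (\<integral>x. exp (\<i> * complex_of_real (t * f x)) \<partial>measure_pmf (cond_bern p n S)) ^ (2 ^ k)
    \<le> (\<integral>z. (\<integral>Y.
          cmod (\<integral>x. exp (\<i> * complex_of_real (t * decouple A B k f x Y))
                  \<partial>measure_pmf (cond_pmf (cond_bern p n S) {x. blocksum B k x = z}))
        \<partial>measure_pmf (Ydist B k z))
      \<partial>measure_pmf (map_pmf (blocksum B k) (cond_bern p n S)))"
proof -
  define \<mu> where "\<mu> = cond_bern p n S"
  define bs where "bs = blocksum B k"
  define \<nu> where "\<nu> = map_pmf bs \<mu>"
  define \<mu>z where "\<mu>z = (\<lambda>z. cond_pmf \<mu> {x. bs x = z})"
  define h where "h = (\<lambda>x. exp (\<i> * complex_of_real (t * f x)))"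
  define W where "W = Wset n S"
  define R where "R = (\<lambda>z. \<integral>Y. cmod (\<integral>x. exp (\<i> * complex_of_real (t * decouple A B k f x Y)) \<partial>measure_pmf (\<mu>z z)) \<partial>measure_pmf (Ydist B k z))"
  define \<Phi> where "\<Phi> = (\<lambda>z. \<integral>x. h x \<partial>measure_pmf (\<mu>z z))"
  have \<mu>W: "\<mu> = pmf_of_set W" unfolding \<mu>_def W_def by (rule cond_bern_eq[OF p S])
  have finW: "finite W" and neW: "W \<noteq> {}" unfolding W_def using finite_Wset Wset_ne[OF S] by auto
  have set\<mu>: "set_pmf \<mu> = W" using \<mu>W finW neW by simp
  have fin\<mu>: "finite (set_pmf \<mu>)" using set\<mu> finW by simp
  have set\<nu>: "set_pmf \<nu> = bs ` W" unfolding \<nu>_def using set\<mu> by simp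
  have fin\<nu>: "finite (set_pmf \<nu>)" using set\<nu> finW by simp
  have \<mu>z_eq: "\<mu>z z = pmf_of_set (W \<inter> {x. bs x = z})" if "z \<in> set_pmf \<nu>" for z
    unfolding \<mu>z_def \<mu>W using that set\<nu> finW by (intro cond_pmf_of_set) auto
  have fin\<mu>z: "finite (set_pmf (\<mu>z z))" if "z \<in> set_pmf \<nu>" for z
  proof -
    have ne: "W \<inter> {x. bs x = z} \<noteq> {}" using that set\<nu> by auto
    show ?thesis using finW ne by (simp add: \<mu>z_eq[OF that])
  qed
  have decomp: "bind_pmf \<nu> \<mu>z = \<mu>"
    unfolding \<mu>z_def \<nu>_def
  proof (rule bind_cond_pmf_cancel)
    show "set_pmf \<mu> \<inter> {y. bs y = x} \<noteq> {}" if "x \<in> set_pmf (map_pmf bs \<mu>)" for x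
      using that by auto
    show "set_pmf (map_pmf bs \<mu>) \<inter> {x. bs y = x} \<noteq> {}" if "y \<in> set_pmf \<mu>" for y
      using that by auto
    show "measure_pmf.prob \<mu> {y. bs y = x} = measure_pmf.prob (map_pmf bs \<mu>) {x. bs y = x}"
      if "x \<in> set_pmf (map_pmf bs \<mu>)" "y \<in> set_pmf \<mu>" "bs y = x" for x y
      using that by (simp add: vimage_def eq_commute)
  qed
  have \<phi>: "(\<integral>x. h x \<partial>measure_pmf \<mu>) = (\<integral>z. \<Phi> z \<partial>measure_pmf \<nu>)"
    unfolding \<Phi>_def using fin\<nu> fin\<mu>z by (subst decomp[symmetric]) (rule fin_int_bind)
  have per_z: "cmod (\<Phi> z) ^ (2 ^ k) \<le> R z" if z: "z \<in> set_pmf \<nu>" for z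
  proof -
    obtain w0 where w0: "w0 \<in> W" "bs w0 = z" using z set\<nu> by auto
    define Wz where "Wz = W \<inter> {x. bs x = z}"
    define TA where "TA = resA A ` Wz"
    define PY where "PY = PiE_dflt {1..k} (\<lambda>_. False) (Ublk B z)"
    define G where "G = (\<lambda>(a, y). GG A B k a y)"
    define PYp where "PYp = Pi_pmf {1..k} (\<lambda>_. False) (\<lambda>j. unif_block (B j) (z j))"
    have w0Wz: "w0 \<in> Wset n S \<inter> {x. blocksum B k x = z}" using w0 by (simp add: W_def bs_def)
    note st = Wz_struct[OF cover disjA disjB w0Wz]
    have Weq: "Wz = G ` (TA \<times> PY)" using st(1) unfolding Wz_def TA_def PY_def G_def W_def bs_def .
    have inj: "inj_on G (TA \<times> PY)" using st(2) unfolding Wz_def TA_def PY_def G_def W_def bs_def .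
    have Une: "\<And>j. j \<in> {1..k} \<Longrightarrow> Ublk B z j \<noteq> {}" by (rule st(3))
    have Ufin: "\<And>j. j \<in> {1..k} \<Longrightarrow> finite (Ublk B z j)" by (rule Ublk_fin[OF cover disjA disjB])
    have finWz: "finite Wz" unfolding Wz_def using finW by simp
    have finTA: "finite TA" unfolding TA_def using finWz by simp
    have neTA: "TA \<noteq> {}" unfolding TA_def Wz_def using w0 by auto
    have finPY: "finite PY" unfolding PY_def using Ufin by (intro finite_PiE_dflt) auto
    have nePY: "PY \<noteq> {}" unfolding PY_def using Une by simp
    have PYp_eq: "PYp = pmf_of_set PY"
      unfolding PYp_def PY_def unif_block_eq using Ufin Une by (intro Pi_pmf_of_set) auto
    have finPYp: "finite (set_pmf PYp)" using PYp_eq finPY nePY by simp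
    have finTAp: "finite (set_pmf (pmf_of_set TA))" using finTA neTA by simp
    have \<mu>z_rep: "\<mu>z z = map_pmf G (pair_pmf (pmf_of_set TA) PYp)"
    proof -
      have "\<mu>z z = pmf_of_set Wz" unfolding Wz_def by (rule \<mu>z_eq[OF z])
      also have "\<dots> = map_pmf G (pmf_of_set (TA \<times> PY))"
        unfolding Weq using inj finTA neTA finPY nePY by (intro map_pmf_of_set_inj[symmetric]) auto
      also have "pmf_of_set (TA \<times> PY) = pair_pmf (pmf_of_set TA) PYp"
        unfolding PYp_eq using finTA neTA finPY nePY by (rule pmf_of_set_times)
      finally show ?thesis .
    qed
    have inv: "\<Phi> z = (\<integral>x. (\<integral>y. h (GG A B k x y) \<partial>measure_pmf PYp) \<partial>measure_pmf (\<mu>z z))"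
    proof -
      have "\<Phi> z = (\<integral>a. (\<integral>y. h (GG A B k a y) \<partial>measure_pmf PYp) \<partial>measure_pmf (pmf_of_set TA))"
        unfolding \<Phi>_def \<mu>z_rep fin_int_map fin_int_pair[OF finTAp finPYp] by (simp add: G_def)
      also have "\<dots> = (\<integral>a. (\<integral>y. (\<integral>y'. h (GG A B k (GG A B k a y) y') \<partial>measure_pmf PYp) \<partial>measure_pmf PYp) \<partial>measure_pmf (pmf_of_set TA))"
        by (simp add: GG_GG)
      also have "\<dots> = (\<integral>x. (\<integral>y. h (GG A B k x y) \<partial>measure_pmf PYp) \<partial>measure_pmf (\<mu>z z))"
        unfolding \<mu>z_rep fin_int_map fin_int_pair[OF finTAp finPYp] by (simp add: G_def)
      finally show ?thesis .
    qed
    have card: "card {1..k} = k" by simp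
    have gw: "cmod (\<integral>x. (\<integral>y. exp (\<i> * complex_of_real (t * f (GG A B k x y))) \<partial>measure_pmf (Pi_pmf {1..k} (\<lambda>_. False) (\<lambda>j. unif_block (B j) (z j)))) \<partial>measure_pmf (\<mu>z z)) ^ (2 ^ card {1..k})
      \<le> (\<integral>Y. cmod (\<integral>x. exp (\<i> * complex_of_real (\<Sum>v\<in>{1..k} \<rightarrow>\<^sub>E (UNIV::bool set). (-1) ^ card {j\<in>{1..k}. v j} * (t * f (GG A B k x (\<lambda>j. Y (j, v j)))))) \<partial>measure_pmf (\<mu>z z))
        \<partial>measure_pmf (Pi_pmf ({1..k} \<times> UNIV) (\<lambda>_. False) (\<lambda>(j, l). unif_block (B j) (z j))))"
      by (rule gowers) (auto simp: fin\<mu>z[OF z] unif_block_eq Ufin Une)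
    show ?thesis
      using gw unfolding card inv R_def h_def PYp_def Ydist_def decouple_eq .
  qed
  have "cmod (\<integral>x. h x \<partial>measure_pmf \<mu>) ^ (2 ^ k) \<le> (\<integral>z. cmod (\<Phi> z) \<partial>measure_pmf \<nu>) ^ (2 ^ k)"
    unfolding \<phi> by (intro power_mono integral_norm_bound) auto
  also have "\<dots> \<le> (\<integral>z. cmod (\<Phi> z) ^ (2 ^ k) \<partial>measure_pmf \<nu>)"
    using fin\<nu> by (intro fin_jensen) auto
  also have "\<dots> \<le> (\<integral>z. R z \<partial>measure_pmf \<nu>)"
    using fin\<nu> per_z by (intro fin_int_mono) auto
  finally show ?thesis unfolding R_def \<mu>z_def \<nu>_def \<mu>_def bs_def h_def .
qed


end
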